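(* Let $g(x)=\sum_{n\ge 1}\frac{2\,(4n+1)!}{(n+1)!\,(3n+2)!}\,x^n$, regarded as a formal power series. Then $$\lim_{n\to\infty}\frac{[x^n]\,(g(x))^2}{[x^n]\,g(x)}=\frac{10}{27}.$$
   Context: For a formal power series $f(x)$, $[x^n]f(x)$ denotes the coefficient of $x^n$ in $f(x)$. *)

theory Defs
  imports "HOL-Computational_Algebra.Formal_Power_Series"
begin

definition g_fps :: "real fps" where
  "g_fps = Abs_fps (\<lambda>n. if n = 0 then 0
      else 2 * fact (4*n+1) / (fact (n+1) * fact (3*n+2)))"

end

theory Submission imports Defs "HOL-Real_Asymp.Real_Asymp" begin

fun Aq :: "nat \<Rightarrow> real \<Rightarrow> real" where
  "Aq 0 x = 1"
| "Aq (Suc m) x = x * pochhammer (x + 3 * real m + 4) m / fact (Suc m)"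

lemma Aq_shift: "Aq (Suc m) x - Aq (Suc m) (x - 1) = Aq m (x + 3)"
proof (cases m)
  case 0 then show ?thesis by simp
next
  case (Suc k)
  define P where "P = pochhammer (x + 3*real k + 7) k"
  have e1: "pochhammer (x + 3 * real (Suc k) + 4) (Suc k) = (x + 3*real k + 7 + real k) * P"
    unfolding P_def by (simp add: pochhammer_rec' algebra_simps)
  have e2: "pochhammer (x - 1 + 3 * real (Suc k) + 4) (Suc k) = (x + 3*real k + 6) * P"
    unfolding P_def by (simp add: pochhammer_rec algebra_simps)
  have e3: "pochhammer (x + 3 + 3 * real k + 4) k = P"
    unfolding P_def by (simp add: algebra_simps)
  have f1: "fact (Suc (Suc k)) = (real k + 2) * (real k + 1) * (fact k :: real)"
    by (simp add: algebra_simps)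
  have f2: "fact (Suc k) = (real k + 1) * (fact k :: real)"
    by (simp add: algebra_simps)
  have fk: "(fact k :: real) > 0" by simp
  have key: "\<And>F a. F > 0 \<Longrightarrow> a > 0 \<Longrightarrow>
     x * ((x + 4*a + 3) * P) / ((a+1) * a * F) -
     (x - 1) * ((x + 3*a + 3) * P) / ((a+1) * a * F) = (x + 3) * P / (a * F)"
  proof -
    fix F a :: real assume h: "F > 0" "a > 0"
    have "x * ((x + 4*a + 3) * P) - (x - 1) * ((x + 3*a + 3) * P) = (a+1) * ((x+3)*P)"
      by (simp add: algebra_simps)
    hence "x * ((x + 4*a + 3) * P) / ((a+1) * a * F) -
     (x - 1) * ((x + 3*a + 3) * P) / ((a+1) * a * F) = (a+1) * ((x+3)*P) / ((a+1) * (a * F))"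
      by (simp add: diff_divide_distrib[symmetric] mult.assoc)
    also have "\<dots> = (x + 3) * P / (a * F)"
      using h by (subst mult_divide_mult_cancel_left) auto
    finally show "x * ((x + 4*a + 3) * P) / ((a+1) * a * F) -
     (x - 1) * ((x + 3*a + 3) * P) / ((a+1) * a * F) = (x + 3) * P / (a * F)" .
  qed
  have e4: "x + 3*real k + 7 + real k = x + 4 * (real k + 1) + 3" "x + 3*real k + 6 = x + 3 * (real k + 1) + 3"
    "real k + 2 = (real k + 1) + 1" by simp_all
  show ?thesis
    unfolding Suc Aq.simps e1 e2 e3 f1 f2 e4
    by (rule key[OF fk]) auto
qed

lemma Aq_Suc_0: "Aq (Suc m) 0 = 0" by simp

lemma HR: "(\<Sum>k\<le>n. Aq k x * Aq (n-k) (of_int j)) = Aq n (x + of_int j)"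
proof (induction n arbitrary: x j)
  case 0 then show ?case by simp
next
  case (Suc n)
  define D where "D = (\<lambda>y. (\<Sum>k\<le>Suc n. Aq k x * Aq (Suc n - k) y) - Aq (Suc n) (x + y))"
  have per: "D (of_int i) = D (of_int i - 1)" for i :: int
  proof -
    have s1: "(\<Sum>k\<le>Suc n. Aq k x * Aq (Suc n - k) y) =
       (\<Sum>k\<le>n. Aq k x * Aq (Suc (n - k)) y) + Aq (Suc n) x" for y
      by (simp add: Suc_diff_le)
    have "D (of_int i) - D (of_int i - 1) =
        (\<Sum>k\<le>n. Aq k x * (Aq (Suc (n - k)) (of_int i) - Aq (Suc (n - k)) (of_int i - 1)))
         - (Aq (Suc n) (x + of_int i) - Aq (Suc n) (x + of_int i - 1))"
      unfolding D_def s1 by (simp add: sum_subtractf algebra_simps)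
    also have "\<dots> = (\<Sum>k\<le>n. Aq k x * Aq (n - k) (of_int i + 3)) - Aq n (x + of_int i + 3)"
      by (simp only: Aq_shift)
    also have "\<dots> = 0" using Suc.IH[of x "i+3"] by (simp add: add.assoc)
    finally show ?thesis by simp
  qed
  have D0: "D 0 = 0"
  proof -
    have "(\<Sum>k\<le>Suc n. Aq k x * Aq (Suc n - k) 0) = Aq (Suc n) x"
      by (simp add: Suc_diff_le)
    thus ?thesis unfolding D_def by simp
  qed
  have "D (of_int i) = 0" for i :: int
  proof (induction i rule: int_induct[where k=0])
    case base then show ?case using D0 by simp
  next
    case (step1 i) then show ?case using per[of "i+1"] by simp
  next
    case (step2 i) then show ?case using per[of i] by simp
  qed
  then show ?case unfolding D_def by simp
qed

definition Uf :: "real \<Rightarrow> real fps" where "Uf x = Abs_fps (\<lambda>m. Aq m x)"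

lemma Uf_nth [simp]: "fps_nth (Uf x) m = Aq m x" by (simp add: Uf_def)

lemma Uf_mult: "Uf x * Uf (of_int j) = Uf (x + of_int j)"
  by (rule fps_ext) (simp add: fps_mult_nth atLeast0AtMost HR)

lemma U11: "Uf (-1) * Uf (-1) = Uf (-2)" using Uf_mult[of "-1" "-1"] by simp
lemma U12: "Uf (-1) * Uf (-2) = Uf (-3)" using Uf_mult[of "-1" "-2"] by simp
lemma U22: "Uf (-2) * Uf (-2) = Uf (-4)" using Uf_mult[of "-2" "-2"] by simp

lemma numeral_mult_nth: "fps_nth (numeral k * (f :: real fps)) n = numeral k * fps_nth f n"
  by (simp add: fps_numeral_fps_const)

lemma poch_fact: "pochhammer (real a + 1) j = fact (a + j) / (fact a :: real)"
proof -
  have "(fact (a + j) :: real) = pochhammer 1 (a + j)" by (simp add: pochhammer_fact)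
  also have "\<dots> = pochhammer 1 a * pochhammer (1 + real a) j" by (simp add: pochhammer_product')
  also have "\<dots> = fact a * pochhammer (real a + 1) j" by (simp add: pochhammer_fact add.commute)
  finally show ?thesis by (simp add: field_simps)
qed

lemma AqF: "r \<le> 3*m+3 \<Longrightarrow>
  Aq (Suc m) (- real r) = - real r * fact (4*m+3-r) / (fact (3*m+3-r) * fact (Suc m))"
proof -
  assume h: "r \<le> 3*m+3"
  have "- real r + 3 * real m + 4 = real (3*m+3-r) + 1" using h by (simp add: of_nat_diff)
  moreover have "3*m+3-r + m = 4*m+3-r" using h by simp
  ultimately have p: "pochhammer (- real r + 3 * real m + 4) m = fact (4*m+3-r) / fact (3*m+3-r)"
    using poch_fact[of "3*m+3-r" m] by metis
  show ?thesis unfolding Aq.simps p by simp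
qed

lemma fS: "(fact (Suc k) :: real) = (real k + 1) * fact k" by simp

lemma facts:
  fixes n :: nat
  defines "F1 \<equiv> (fact (4*n+1) :: real)" and "F2 \<equiv> (fact (3*n+1) :: real)" and "F3 \<equiv> (fact (n+1) :: real)"
  shows "(fact (4*n+2) :: real) = (4*real n+2) * F1"
    "(fact (4*n+3) :: real) = (4*real n+3) * (4*real n+2) * F1"
    "(fact (4*n+4) :: real) = (4*real n+4) * (4*real n+3) * (4*real n+2) * F1"
    "(fact (4*n+5) :: real) = (4*real n+5) * (4*real n+4) * (4*real n+3) * (4*real n+2) * F1"
    "(fact (4*n+6) :: real) = (4*real n+6) * (4*real n+5) * (4*real n+4) * (4*real n+3) * (4*real n+2) * F1"
    "(fact (3*n+2) :: real) = (3*real n+2) * F2"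
    "(fact (3*n+3) :: real) = (3*real n+3) * (3*real n+2) * F2"
    "(fact (3*n+4) :: real) = (3*real n+4) * (3*real n+3) * (3*real n+2) * F2"
    "(fact (3*n+5) :: real) = (3*real n+5) * (3*real n+4) * (3*real n+3) * (3*real n+2) * F2"
    "(fact (n+2) :: real) = (real n+2) * F3"
proof -
  have a: "4*n+2 = Suc (4*n+1)" "4*n+3 = Suc (4*n+2)" "4*n+4 = Suc (4*n+3)" "4*n+5 = Suc (4*n+4)" "4*n+6 = Suc (4*n+5)"
    "3*n+2 = Suc (3*n+1)" "3*n+3 = Suc (3*n+2)" "3*n+4 = Suc (3*n+3)" "3*n+5 = Suc (3*n+4)" "n+2 = Suc (n+1)" by simp_all
  show "(fact (4*n+2) :: real) = (4*real n+2) * F1" unfolding F1_def by (subst a(1), subst fS) simp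
  then show "(fact (4*n+3) :: real) = (4*real n+3) * (4*real n+2) * F1" by (subst a(2), subst fS) simp
  then show "(fact (4*n+4) :: real) = (4*real n+4) * (4*real n+3) * (4*real n+2) * F1" by (subst a(3), subst fS) simp
  then show "(fact (4*n+5) :: real) = (4*real n+5) * (4*real n+4) * (4*real n+3) * (4*real n+2) * F1" by (subst a(4), subst fS) simp
  then show "(fact (4*n+6) :: real) = (4*real n+6) * (4*real n+5) * (4*real n+4) * (4*real n+3) * (4*real n+2) * F1" by (subst a(5), subst fS) simp
  show "(fact (3*n+2) :: real) = (3*real n+2) * F2" unfolding F2_def by (subst a(6), subst fS) simp
  then show "(fact (3*n+3) :: real) = (3*real n+3) * (3*real n+2) * F2" by (subst a(7), subst fS) simp
  then show "(fact (3*n+4) :: real) = (3*real n+4) * (3*real n+3) * (3*real n+2) * F2" by (subst a(8), subst fS) simp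
  then show "(fact (3*n+5) :: real) = (3*real n+5) * (3*real n+4) * (3*real n+3) * (3*real n+2) * F2" by (subst a(9), subst fS) simp
  show "(fact (n+2) :: real) = (real n+2) * F3" unfolding F3_def by (subst a(10), subst fS) simp
qed

lemma terms:
  fixes n :: nat
  defines "K \<equiv> (fact (4*n+1) :: real) / (fact (3*n+1) * fact (n+1))"
  defines "t \<equiv> real n"
  shows "Aq (Suc n) (-1) = K * (-(4*t+2)/(3*t+2))"
    "Aq (Suc n) (-2) = K * (-2)"
    "Aq (Suc (Suc n)) (-1) = K * (-(4*t+6)*(4*t+5)*(4*t+4)*(4*t+3)*(4*t+2) / ((3*t+5)*(3*t+4)*(3*t+3)*(3*t+2)*(t+2)))"
    "Aq (Suc (Suc n)) (-2) = K * (-2*(4*t+5)*(4*t+4)*(4*t+3)*(4*t+2) / ((3*t+4)*(3*t+3)*(3*t+2)*(t+2)))"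
    "Aq (Suc (Suc n)) (-3) = K * (-3*(4*t+4)*(4*t+3)*(4*t+2) / ((3*t+3)*(3*t+2)*(t+2)))"
    "Aq (Suc (Suc n)) (-4) = K * (-4*(4*t+3)*(4*t+2) / ((3*t+2)*(t+2)))"
    "n \<ge> 1 \<Longrightarrow> fps_nth g_fps n = K * (2 / (3*t+2))"
proof -
  have r: "\<And>x y z :: real. x / (y * z) = x / y / z" by simp
  have b1: "Aq (Suc n) (-1) = - 1 * fact (4*n+2) / (fact (3*n+2) * fact (n+1))"
    using AqF[of 1 n] by simp
  show "Aq (Suc n) (-1) = K * (-(4*t+2)/(3*t+2))"
    unfolding b1 facts K_def t_def by (simp add: divide_inverse inverse_mult_distrib ac_simps; simp add: algebra_simps)
  have b2: "Aq (Suc n) (-2) = - 2 * fact (4*n+1) / (fact (3*n+1) * fact (n+1))"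
    using AqF[of 2 n] by simp
  show "Aq (Suc n) (-2) = K * (-2)"
    unfolding b2 facts K_def t_def by (simp add: divide_inverse inverse_mult_distrib ac_simps; simp add: algebra_simps)
  have c1: "Aq (Suc (Suc n)) (-1) = - 1 * fact (4*n+6) / (fact (3*n+5) * fact (n+2))"
    using AqF[of 1 "Suc n"] by (simp add: add.commute)
  show "Aq (Suc (Suc n)) (-1) = K * (-(4*t+6)*(4*t+5)*(4*t+4)*(4*t+3)*(4*t+2) / ((3*t+5)*(3*t+4)*(3*t+3)*(3*t+2)*(t+2)))"
    unfolding c1 facts K_def t_def by (simp add: divide_inverse inverse_mult_distrib ac_simps; simp add: algebra_simps)
  have c2: "Aq (Suc (Suc n)) (-2) = - 2 * fact (4*n+5) / (fact (3*n+4) * fact (n+2))"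
    using AqF[of 2 "Suc n"] by (simp add: add.commute)
  show "Aq (Suc (Suc n)) (-2) = K * (-2*(4*t+5)*(4*t+4)*(4*t+3)*(4*t+2) / ((3*t+4)*(3*t+3)*(3*t+2)*(t+2)))"
    unfolding c2 facts K_def t_def by (simp add: divide_inverse inverse_mult_distrib ac_simps; simp add: algebra_simps)
  have c3: "Aq (Suc (Suc n)) (-3) = - 3 * fact (4*n+4) / (fact (3*n+3) * fact (n+2))"
    using AqF[of 3 "Suc n"] by (simp add: add.commute)
  show "Aq (Suc (Suc n)) (-3) = K * (-3*(4*t+4)*(4*t+3)*(4*t+2) / ((3*t+3)*(3*t+2)*(t+2)))"
    unfolding c3 facts K_def t_def by (simp add: divide_inverse inverse_mult_distrib ac_simps; simp add: algebra_simps)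
  have c4: "Aq (Suc (Suc n)) (-4) = - 4 * fact (4*n+3) / (fact (3*n+2) * fact (n+2))"
    using AqF[of 4 "Suc n"] by (simp add: add.commute)
  show "Aq (Suc (Suc n)) (-4) = K * (-4*(4*t+3)*(4*t+2) / ((3*t+2)*(t+2)))"
    unfolding c4 facts K_def t_def by (simp add: divide_inverse inverse_mult_distrib ac_simps; simp add: algebra_simps)
  show "n \<ge> 1 \<Longrightarrow> fps_nth g_fps n = K * (2 / (3*t+2))"
    unfolding g_fps_def facts K_def t_def by (simp add: divide_inverse inverse_mult_distrib ac_simps; simp add: algebra_simps)
qed

lemma alg_g: "d > 0 \<Longrightarrow> (K::real) * (2/d) = 3 * (K * (-(4*((d-2)/3)+2)/d)) - 2 * (K * (-2))"
  by (simp add: field_simps)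

lemma gX: "fps_X * g_fps = 3 * Uf (-1) - 2 * Uf (-2) - 1 - fps_X"
proof (rule fps_ext)
  fix n
  show "fps_nth (fps_X * g_fps) n = fps_nth (3 * Uf (-1) - 2 * Uf (-2) - 1 - fps_X) n"
  proof (cases n)
    case 0 then show ?thesis by (simp add: g_fps_def numeral_mult_nth fps_numeral_nth)
  next
    case (Suc m)
    show ?thesis
    proof (cases "m = 0")
      case True then show ?thesis using Suc by (simp add: g_fps_def numeral_mult_nth fps_numeral_nth)
    next
      case False
      define t where "t = real m"
      define K where "K = (fact (4*m+1) :: real) / (fact (3*m+1) * fact (m+1))"
      have "3*t+2 > 0" unfolding t_def by simp
      from alg_g[OF this, of K] have "K * (2 / (3*t+2)) = 3 * (K * (-(4*t+2)/(3*t+2))) - 2 * (K * (-2))"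
        by simp
      then show ?thesis using Suc False terms(1,2,7)[of m]
        unfolding K_def t_def by (simp add: numeral_mult_nth fps_numeral_nth)
    qed
  qed
qed

lemma ring_id: "(3 * U1 - 2 * U2 - 1 - X)^2 =
   9 * (U1 * U1) + 4 * (U2 * U2) - 12 * (U1 * U2) - 6 * U1 - 6 * (X * U1) + 4 * U2 + 4 * (X * U2) + 1 + 2 * X + X^2"
  for U1 U2 X :: "real fps"
  by (simp add: power2_eq_square algebra_simps)

lemma g2X: "fps_X^2 * g_fps^2 = 13 * Uf (-2) + 4 * Uf (-4) - 12 * Uf (-3) - 6 * Uf (-1)
   - 6 * (fps_X * Uf (-1)) + 4 * (fps_X * Uf (-2)) + 1 + 2 * fps_X + fps_X^2"
proof -
  have "fps_X^2 * g_fps^2 = (fps_X * g_fps)^2" by (simp add: power_mult_distrib)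
  also have "\<dots> = (3 * Uf (-1) - 2 * Uf (-2) - 1 - fps_X)^2" by (simp add: gX)
  also have "\<dots> = 9 * (Uf (-2)) + 4 * (Uf (-4)) - 12 * (Uf (-3)) - 6 * Uf (-1) - 6 * (fps_X * Uf (-1)) + 4 * Uf (-2) + 4 * (fps_X * Uf (-2)) + 1 + 2 * fps_X + fps_X^2"
    unfolding ring_id U11 U12 U22 ..
  finally show ?thesis by (simp add: algebra_simps)
qed

lemma g2_nth: "n \<ge> 1 \<Longrightarrow> fps_nth (g_fps^2) n = 13 * Aq (Suc (Suc n)) (-2) + 4 * Aq (Suc (Suc n)) (-4)
   - 12 * Aq (Suc (Suc n)) (-3) - 6 * Aq (Suc (Suc n)) (-1) - 6 * Aq (Suc n) (-1) + 4 * Aq (Suc n) (-2)"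
proof -
  assume n: "n \<ge> 1"
  have "fps_nth (g_fps^2) n = fps_nth (fps_X^2 * g_fps^2) (Suc (Suc n))"
    by (simp add: fps_X_power_mult_nth)
  also have "\<dots> = fps_nth (13 * Uf (-2) + 4 * Uf (-4) - 12 * Uf (-3) - 6 * Uf (-1)
   - 6 * (fps_X * Uf (-1)) + 4 * (fps_X * Uf (-2)) + 1 + 2 * fps_X + fps_X^2) (Suc (Suc n))"
    by (simp only: g2X)
  also have "\<dots> = 13 * Aq (Suc (Suc n)) (-2) + 4 * Aq (Suc (Suc n)) (-4)
   - 12 * Aq (Suc (Suc n)) (-3) - 6 * Aq (Suc (Suc n)) (-1) - 6 * Aq (Suc n) (-1) + 4 * Aq (Suc n) (-2)"
    using n by (simp add: numeral_mult_nth fps_X_power_nth fps_X_nth fps_numeral_nth)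
  finally show ?thesis .
qed

definition RatF :: "real \<Rightarrow> real" where
  "RatF t = (13 * (-2*(4*t+5)*(4*t+4)*(4*t+3)*(4*t+2) / ((3*t+4)*(3*t+3)*(3*t+2)*(t+2)))
     + 4 * (-4*(4*t+3)*(4*t+2) / ((3*t+2)*(t+2)))
     - 12 * (-3*(4*t+4)*(4*t+3)*(4*t+2) / ((3*t+3)*(3*t+2)*(t+2)))
     - 6 * (-(4*t+6)*(4*t+5)*(4*t+4)*(4*t+3)*(4*t+2) / ((3*t+5)*(3*t+4)*(3*t+3)*(3*t+2)*(t+2)))
     - 6 * (-(4*t+2)/(3*t+2)) + 4 * (-2)) / (2 / (3*t+2))"

lemma RatF_lim: "(\<lambda>n. RatF (real n)) \<longlonglongrightarrow> 10 / 27"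
  unfolding RatF_def by real_asymp

lemma factor6: "13*(K*a) + 4*(K*b) - 12*(K*c) - 6*(K*d) - 6*(K*e) + 4*(K*f) = K*(13*a+4*b-12*c-6*d-6*e+4*f)"
  for K a b c d e f :: real
  by (simp add: algebra_simps)

theorem mainTheorem1:
  shows "(\<lambda>n. fps_nth (g_fps ^ 2) n / fps_nth g_fps n) \<longlonglongrightarrow> 10 / 27"
proof -
  have ev: "eventually (\<lambda>n. RatF (real n) = fps_nth (g_fps ^ 2) n / fps_nth g_fps n) sequentially"
    using eventually_ge_at_top[of "1::nat"]
  proof eventually_elim
    case (elim n)
    define K where "K = (fact (4*n+1) :: real) / (fact (3*n+1) * fact (n+1))"
    have K: "K \<noteq> 0" unfolding K_def by simp
    have "fps_nth (g_fps ^ 2) n / fps_nth g_fps n =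
      (K * (13 * (-2*(4*real n+5)*(4*real n+4)*(4*real n+3)*(4*real n+2) / ((3*real n+4)*(3*real n+3)*(3*real n+2)*(real n+2)))
     + 4 * (-4*(4*real n+3)*(4*real n+2) / ((3*real n+2)*(real n+2)))
     - 12 * (-3*(4*real n+4)*(4*real n+3)*(4*real n+2) / ((3*real n+3)*(3*real n+2)*(real n+2)))
     - 6 * (-(4*real n+6)*(4*real n+5)*(4*real n+4)*(4*real n+3)*(4*real n+2) / ((3*real n+5)*(3*real n+4)*(3*real n+3)*(3*real n+2)*(real n+2)))
     - 6 * (-(4*real n+2)/(3*real n+2)) + 4 * (-2))) / (K * (2 / (3*real n+2)))"
      unfolding g2_nth[OF elim] terms(7)[OF elim] terms(1-6)[of n] K_def[symmetric] factor6 ..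
    also have "\<dots> = RatF (real n)" unfolding RatF_def using K by (rule mult_divide_mult_cancel_left)
    finally show ?case by simp
  qed
  show ?thesis using RatF_lim ev by (rule Lim_transform_eventually)
qed

end
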